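(* For every integer $n\ge 0$, \[ (p_{1,5}+p_{4,5})(n) = M+\sum_{k=1}^\infty (-1)^{k+1}\big( (p_{1,5}+p_{4,5})(n-P_{7,k})+(p_{1,5}+p_{4,5})(n-Q_{7,k})\big), \] where $P_{7,k}=\frac{k(5k-3)}{2}$, $Q_{7,k}=\frac{k(5k+3)}{2}$, and \[ M = \begin{cases} (-1)^m, &\text{if } n=5P_{5,m}\text{ or }n=5Q_{5,m}\text{ for some }m\in\mathbb{N}_0, \\ 0, & \text{otherwise,} \end{cases} \] with $P_{5,m}=\frac{m(3m-1)}{2}$, $Q_{5,m}=\frac{m(3m+1)}{2}$.
   Context: $(p_{1,5}+p_{4,5})(n)$ denotes the number of partitions of $n$ in which every part is congruent to $1$ or to $4$ modulo $5$; it equals $1$ for $n=0$ and is set to $0$ for $n\notin\mathbb{N}_0$. $\mathbb{N}_0=\{0,1,2,\dots\}$. *)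

theory Defs
  imports Complex_Main "HOL-Library.Multiset"
begin

definition p15p45 :: "int \<Rightarrow> int" where
  "p15p45 n = (if n < 0 then 0 else
     int (card {M :: nat multiset. (\<forall>x\<in>#M. x mod 5 = 1 \<or> x mod 5 = 4) \<and> sum_mset M = nat n}))"

definition P7 :: "nat \<Rightarrow> int" where "P7 k = int k * (5 * int k - 3) div 2"
definition Q7 :: "nat \<Rightarrow> int" where "Q7 k = int k * (5 * int k + 3) div 2"
definition P5 :: "nat \<Rightarrow> int" where "P5 m = int m * (3 * int m - 1) div 2"
definition Q5 :: "nat \<Rightarrow> int" where "Q5 m = int m * (3 * int m + 1) div 2"

definition Mterm :: "int \<Rightarrow> int" where
  "Mterm n = (if \<exists>m::nat. n = 5 * P5 m \<or> n = 5 * Q5 m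
              then (-1) ^ (SOME m::nat. n = 5 * P5 m \<or> n = 5 * Q5 m) else 0)"

end

theory Submission
  imports Defs "HOL-Computational_Algebra.Formal_Power_Series"
begin

unbundle fps_syntax


lemma size_le_sum_mset: "(\<forall>x\<in>#M. (1::nat) \<le> x) \<Longrightarrow> size M \<le> sum_mset M"
  by (induction M) auto

definition cnt :: "nat set \<Rightarrow> nat \<Rightarrow> nat" where
  "cnt A n = card {M. set_mset M \<subseteq> A \<and> sum_mset M = n}"

lemma finite_cnt_set:
  assumes "finite A" "0 \<notin> A"
  shows "finite {M. set_mset M \<subseteq> A \<and> sum_mset M = (n::nat)}"
proof (rule finite_subset)
  show "{M. set_mset M \<subseteq> A \<and> sum_mset M = n} \<subseteq> (\<Union>s\<in>{..n}. multisets_of_size A s)"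
  proof
    fix M assume M: "M \<in> {M. set_mset M \<subseteq> A \<and> sum_mset M = n}"
    then have "\<forall>x\<in>#M. (1::nat) \<le> x" using assms(2) by (auto simp: Suc_le_eq) (metis gr0I subsetD)
    then have "size M \<le> n" using size_le_sum_mset M by fastforce
    then show "M \<in> (\<Union>s\<in>{..n}. multisets_of_size A s)" using M by (auto simp: multisets_of_size_def)
  qed
  show "finite (\<Union>s\<in>{..n}. multisets_of_size A s)" using assms by auto
qed

lemma cnt_empty: "cnt {} n = (if n = 0 then 1 else 0)"
proof -
  have "{M. set_mset M \<subseteq> {} \<and> sum_mset M = n} = (if n = 0 then {{#}} else {})" by auto
  then show ?thesis by (simp add: cnt_def)
qed

lemma cnt_insert:
  assumes "finite A" "0 \<notin> A" "p \<notin> A" "p > 0"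
  shows "cnt (insert p A) n = cnt A n + (if p \<le> n then cnt (insert p A) (n - p) else 0)"
proof -
  define S1 where "S1 = {M. set_mset M \<subseteq> A \<and> sum_mset M = n}"
  define S2 where "S2 = {M. set_mset M \<subseteq> insert p A \<and> sum_mset M = n \<and> p \<in># M}"
  define T where "T = {M. set_mset M \<subseteq> insert p A \<and> sum_mset M = n - p}"
  have fin0: "0 \<notin> insert p A" using assms by auto
  have split: "{M. set_mset M \<subseteq> insert p A \<and> sum_mset M = n} = S1 \<union> S2"
    unfolding S1_def S2_def using assms(3) by blast
  have disj: "S1 \<inter> S2 = {}" unfolding S1_def S2_def using assms(3) by blast
  have f1: "finite S1" unfolding S1_def using finite_cnt_set assms by blast
  have f2: "finite S2" unfolding S2_def
    by (rule finite_subset[OF _ finite_cnt_set[OF _ fin0, of n]]) (use assms in auto)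
  have S2eq: "S2 = (if p \<le> n then add_mset p ` T else {})"
  proof (cases "p \<le> n")
    case True
    have "S2 = add_mset p ` T"
    proof
      show "S2 \<subseteq> add_mset p ` T"
      proof
        fix M assume "M \<in> S2"
        then have M: "set_mset M \<subseteq> insert p A" "sum_mset M = n" "p \<in># M" unfolding S2_def by auto
        then have "M = add_mset p (M - {#p#})" by simp
        moreover have "M - {#p#} \<in> T" unfolding T_def using M
          by (auto dest: in_diffD) (metis M(3) add_diff_cancel_left' sum_mset.remove)
        ultimately show "M \<in> add_mset p ` T" by blast
      qed
      show "add_mset p ` T \<subseteq> S2" unfolding T_def S2_def using True by auto
    qed
    then show ?thesis using True by simp
  next
    case False
    have "S2 = {}"
    proof (rule ccontr)
      assume "S2 \<noteq> {}"
      then obtain M where M: "sum_mset M = n" "p \<in># M" unfolding S2_def by auto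
      then have "p \<le> sum_mset M" by (metis le_add1 sum_mset.remove)
      then show False using M False by simp
    qed
    then show ?thesis using False by simp
  qed
  have "cnt (insert p A) n = card S1 + card S2"
    unfolding cnt_def split using card_Un_disjoint[OF f1 f2 disj] .
  also have "card S1 = cnt A n" unfolding S1_def cnt_def ..
  also have "card S2 = (if p \<le> n then cnt (insert p A) (n - p) else 0)"
    unfolding S2eq cnt_def T_def[symmetric] by (simp add: card_image inj_on_def)
  finally show ?thesis .
qed


definition Gen :: "nat set \<Rightarrow> real fps" where
  "Gen A = Abs_fps (\<lambda>n. real (cnt A n))"

lemma Gen_prod:
  assumes "finite A" "0 \<notin> A"
  shows "Gen A * (\<Prod>p\<in>A. 1 - fps_X ^ p) = 1"
  using assms
proof (induction A rule: finite_induct)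
  case empty
  show ?case by (simp add: Gen_def cnt_empty fps_eq_iff fps_one_nth)
next
  case (insert p A)
  have p0: "p > 0" using insert.prems by auto
  have A0: "0 \<notin> A" using insert.prems by auto
  have "Gen (insert p A) * (1 - fps_X ^ p) = Gen A"
  proof (rule fps_ext)
    fix n
    show "(Gen (insert p A) * (1 - fps_X ^ p)) $ n = Gen A $ n"
      using cnt_insert[OF insert.hyps(1) A0 insert.hyps(2) p0, of n]
      by (simp add: Gen_def algebra_simps fps_X_power_mult_right_nth fps_X_power_mult_nth)
  qed
  then show ?case using insert.IH[OF A0] insert.hyps
    by (simp add: mult.assoc[symmetric])
qed

fun qb :: "'a::comm_ring_1 \<Rightarrow> nat \<Rightarrow> nat \<Rightarrow> 'a" where
  "qb Q 0 k = (if k = 0 then 1 else 0)"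
| "qb Q (Suc m) k = (if k = 0 then 1 else qb Q m (k - 1) + Q ^ k * qb Q m k)"

lemma qb_zero: "m < k \<Longrightarrow> qb Q m k = 0"
  by (induction m arbitrary: k) auto

lemma qb_0 [simp]: "qb Q m 0 = 1"
  by (cases m) auto

definition tri :: "nat \<Rightarrow> nat" where "tri k = k * (k - 1) div 2"

lemma tri_Suc: "tri (Suc k) = tri k + k"
proof -
  have "even (k * (k - 1))" by (cases k) auto
  then show ?thesis unfolding tri_def by (cases k) (auto elim!: evenE simp: algebra_simps)
qed

lemma tri_0[simp]: "tri 0 = 0" by (simp add: tri_def)

lemma qbin_thm:
  fixes Q y z :: "'a::comm_ring_1"
  shows "(\<Prod>i<m. z + y * Q ^ i) = (\<Sum>k\<le>m. qb Q m k * Q ^ tri k * y ^ k * z ^ (m - k))"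
proof (induction m arbitrary: y)
  case 0
  then show ?case by simp
next
  case (Suc m)
  define g where "g k = qb Q m k * Q ^ (tri k + k) * y ^ k * z ^ (Suc m - k)" for k
  have "(\<Prod>i<Suc m. z + y * Q ^ i) = (z + y) * (\<Prod>i<m. z + (y * Q) * Q ^ i)"
    by (subst prod.lessThan_Suc_shift) (simp add: mult.assoc)
  also have "\<dots> = z * (\<Sum>k\<le>m. qb Q m k * Q ^ tri k * (y * Q) ^ k * z ^ (m - k))
      + y * (\<Sum>k\<le>m. qb Q m k * Q ^ tri k * (y * Q) ^ k * z ^ (m - k))"
    unfolding Suc.IH[of "y * Q"] by (simp add: distrib_right)
  also have "z * (\<Sum>k\<le>m. qb Q m k * Q ^ tri k * (y * Q) ^ k * z ^ (m - k)) = (\<Sum>k\<le>m. g k)"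
    unfolding g_def sum_distrib_left
    by (intro sum.cong refl) (simp add: power_mult_distrib power_add algebra_simps Suc_diff_le)
  also have "\<dots> = (\<Sum>k\<le>Suc m. g k)" by (simp add: g_def qb_zero)
  also have "\<dots> = z ^ Suc m + (\<Sum>k\<le>m. Q ^ Suc k * qb Q m (Suc k) * Q ^ tri (Suc k) * y ^ Suc k * z ^ (m - k))"
    by (subst sum.atMost_Suc_shift) (simp add: g_def tri_Suc algebra_simps power_add)
  also have "y * (\<Sum>k\<le>m. qb Q m k * Q ^ tri k * (y * Q) ^ k * z ^ (m - k))
      = (\<Sum>k\<le>m. qb Q m k * Q ^ tri (Suc k) * y ^ Suc k * z ^ (m - k))"
    unfolding sum_distrib_left
    by (intro sum.cong refl) (simp add: power_mult_distrib power_add algebra_simps tri_Suc)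
  finally have L: "(\<Prod>i<Suc m. z + y * Q ^ i) = z ^ Suc m +
   (\<Sum>k\<le>m. Q ^ Suc k * qb Q m (Suc k) * Q ^ tri (Suc k) * y ^ Suc k * z ^ (m - k)) +
   (\<Sum>k\<le>m. qb Q m k * Q ^ tri (Suc k) * y ^ Suc k * z ^ (m - k))" .
  have R: "(\<Sum>k\<le>Suc m. qb Q (Suc m) k * Q ^ tri k * y ^ k * z ^ (Suc m - k)) = z ^ Suc m +
     (\<Sum>k\<le>m. (qb Q m k + Q ^ Suc k * qb Q m (Suc k)) * Q ^ tri (Suc k) * y ^ Suc k * z ^ (m - k))"
    by (subst sum.atMost_Suc_shift) simp
  show ?case unfolding L R by (simp add: algebra_simps sum.distrib)
qed

definition pp :: "'a::comm_ring_1 \<Rightarrow> nat \<Rightarrow> 'a" where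
  "pp Q t = (\<Prod>i<t. 1 - Q ^ Suc i)"

lemma pp_Suc: "pp Q (Suc t) = pp Q t * (1 - Q ^ Suc t)"
  by (simp add: pp_def)

lemma qb_prod: "k \<le> m \<Longrightarrow> qb Q m k * pp Q k * pp Q (m - k) = pp Q m"
proof (induction m arbitrary: k)
  case 0
  then show ?case by (simp add: pp_def)
next
  case (Suc m)
  show ?case
  proof (cases "k = 0")
    case True
    then show ?thesis by (simp add: pp_def)
  next
    case False
    then obtain k' where k': "k = Suc k'" by (cases k) auto
    have first: "qb Q m k' * pp Q k * pp Q (Suc m - k) = pp Q m * (1 - Q ^ k)"
      using Suc.IH[of k'] Suc.prems k' by (simp add: pp_Suc algebra_simps)
    have second: "Q ^ k * qb Q m k * pp Q k * pp Q (Suc m - k) = Q ^ k * pp Q m * (1 - Q ^ (Suc m - k))"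
    proof (cases "k \<le> m")
      case True
      then have "Suc m - k = Suc (m - k)" by simp
      then show ?thesis using Suc.IH[OF True] by (simp add: pp_Suc algebra_simps)
    next
      case False
      then show ?thesis using Suc.prems by (simp add: qb_zero)
    qed
    have "qb Q (Suc m) k * pp Q k * pp Q (Suc m - k)
        = qb Q m k' * pp Q k * pp Q (Suc m - k) + Q ^ k * qb Q m k * pp Q k * pp Q (Suc m - k)"
      using k' by (simp add: algebra_simps)
    also have "\<dots> = pp Q m * (1 - Q ^ k) + Q ^ k * pp Q m * (1 - Q ^ (Suc m - k))"
      using first second by simp
    also have "\<dots> = pp Q m * (1 - Q ^ Suc m)"
    proof -
      obtain d where d: "Suc m = k + d" using Suc.prems le_Suc_ex by blast
      then have "Suc m - k = d" by simp
      then show ?thesis unfolding d by (simp add: algebra_simps power_add)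
    qed
    finally show ?thesis by (simp add: pp_Suc)
  qed
qed


lemma prod_lessThan_add: "(\<Prod>i<m + (n::nat). f i) = (\<Prod>i<m. f i) * (\<Prod>i<n. f (m + i))"
  by (induction n) (auto simp: mult.assoc)

lemma sum_arith: "(\<Sum>i<n. a + b * i) = a * n + b * tri (n::nat)"
  by (induction n) (auto simp: tri_Suc algebra_simps)

lemma tri2: "2 * int (tri k) = int k * (int k - 1)"
proof -
  have "even (k * (k - 1))" by (cases k) auto
  then have "2 * tri k = k * (k - 1)" unfolding tri_def by simp
  then have "2 * int (tri k) = int (k * (k - 1))" by linarith
  then show ?thesis by (cases k) (auto simp: algebra_simps)
qed

definition ee :: "nat \<Rightarrow> nat \<Rightarrow> int \<Rightarrow> nat" where
  "ee b a j = nat (int b * (j * (j - 1)) div 2 + int a * j)"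

lemma even_jj: "even (j * (j - 1 :: int))"
  by auto

lemma ee_nonneg:
  assumes "0 < a" "a < b"
  shows "0 \<le> int b * (j * (j - 1)) + 2 * int a * j"
proof (cases "j \<ge> 0")
  case True
  then have "0 \<le> j * (j - 1)" by (cases "j = 0") (auto intro!: mult_nonneg_nonneg)
  then show ?thesis using True by auto
next
  case False
  define m where "m = - j"
  have m: "m > 0" using False m_def by auto
  have "j * (j - 1) = m * (m + 1)" unfolding m_def by (simp add: algebra_simps)
  moreover have "int b * (m * (m + 1)) \<ge> int b * (2 * m)"
    using m by (intro mult_left_mono) auto
  moreover have "int b * (2 * m) \<ge> 2 * int a * m" using m assms by simp
  ultimately show ?thesis unfolding m_def by simp
qed

lemma ee2:
  assumes "0 < a" "a < b"
  shows "2 * int (ee b a j) = int b * (j * (j - 1)) + 2 * int a * j"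
proof -
  obtain t where t: "j * (j - 1) = 2 * t" using even_jj[of j] evenE by blast
  show ?thesis using ee_nonneg[OF assms, of j] unfolding ee_def t by simp
qed

lemma ee_ge:
  assumes "0 < a" "a < b"
  shows "nat \<bar>j\<bar> \<le> ee b a j"
proof -
  have "2 * \<bar>j\<bar> \<le> int b * (j * (j - 1)) + 2 * int a * j"
  proof (cases "j \<ge> 1")
    case True
    then have "0 \<le> j * (j - 1)" by (auto intro!: mult_nonneg_nonneg)
    then have "0 \<le> int b * (j * (j - 1))" by simp
    moreover have "2 * j \<le> 2 * int a * j" using True assms by simp
    ultimately show ?thesis using True by linarith
  next
    case False
    show ?thesis
    proof (cases "j = 0")
      case True then show ?thesis by simp
    next
      case False2: False
      define m where "m = - j"
      have m: "m > 0" using False False2 m_def by auto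
      have "j * (j - 1) = m * (m + 1)" unfolding m_def by (simp add: algebra_simps)
      then have "int b * (j * (j - 1)) = int b * (m * (m + 1))" by simp
      moreover have "int b * (m * (m + 1)) \<ge> int b * (2 * m)"
        using m by (intro mult_left_mono) auto
      moreover have "int b * (2 * m) - 2 * int a * m \<ge> 2 * m"
      proof -
        have "int b * (2 * m) - 2 * int a * m = 2 * m * (int b - int a)" by (simp add: algebra_simps)
        also have "\<dots> \<ge> 2 * m * 1" using m assms by (intro mult_left_mono) auto
        finally show ?thesis by simp
      qed
      moreover have "\<bar>j\<bar> = m" using m unfolding m_def by simp
      moreover have "2 * int a * j = - (2 * int a * m)" unfolding m_def by simp
      ultimately show ?thesis by linarith
    qed
  qed
  then show ?thesis using ee2[OF assms, of j] by linarith
qed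

lemma exponent_identity:
  assumes "0 < a" "a < b" "k \<le> 2 * n"
  shows "b * tri k + a * k + b * n * (2 * n - k) = ((\<Sum>i<n. a + b * i) + b * n * n) + ee b a (int k - int n)"
proof -
  have d: "int (2 * n - k) = 2 * int n - int k" using assms(3) by simp
  have "int (b * tri k + a * k + b * n * (2 * n - k)) = int b * int (tri k) + int a * int k + int b * int n * int (2 * n - k)"
    by simp
  then have "2 * int (b * tri k + a * k + b * n * (2 * n - k))
      = int b * (2 * int (tri k)) + 2 * int a * int k + 2 * int b * int n * (2 * int n - int k)"
    unfolding d by (simp add: algebra_simps)
  also have "\<dots> = int b * (int k * (int k - 1)) + 2 * int a * int k + 2 * int b * int n * (2 * int n - int k)"
    by (simp add: tri2)
  finally have L: "2 * int (b * tri k + a * k + b * n * (2 * n - k)) =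
     int b * (int k * (int k - 1)) + 2 * int a * int k + 2 * int b * int n * (2 * int n - int k)" .
  have "2 * int ((\<Sum>i<n. a + b * i) + b * n * n + ee b a (int k - int n))
      = 2 * int a * int n + int b * (2 * int (tri n)) + 2 * int b * int n * int n + 2 * int (ee b a (int k - int n))"
    unfolding sum_arith by (simp add: algebra_simps)
  also have "\<dots> = 2 * int a * int n + int b * (int n * (int n - 1)) + 2 * int b * int n * int n
      + (int b * ((int k - int n) * (int k - int n - 1)) + 2 * int a * (int k - int n))"
    by (simp add: tri2 ee2[OF assms(1,2)])
  finally have R: "2 * int ((\<Sum>i<n. a + b * i) + b * n * n + ee b a (int k - int n)) =
      2 * int a * int n + int b * (int n * (int n - 1)) + 2 * int b * int n * int n
      + (int b * ((int k - int n) * (int k - int n - 1)) + 2 * int a * (int k - int n))" .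
  define Lx where "Lx = b * tri k + a * k + b * n * (2 * n - k)"
  define Rx where "Rx = (\<Sum>i<n. a + b * i) + b * n * n + ee b a (int k - int n)"
  have "2 * int Lx = 2 * int Rx"
    unfolding Lx_def Rx_def L R by (simp add: algebra_simps)
  then have "Lx = Rx" by simp
  then show ?thesis unfolding Lx_def Rx_def .
qed


lemma neg1_pow: "((-1::'a::comm_ring_1) ^ k) = (-1) ^ n * (-1) ^ (k + n)"
proof -
  have "(-1::'a) ^ n * (-1) ^ (k + n) = (-1) ^ k * ((-1) ^ n * (-1) ^ n)"
    by (simp add: power_add algebra_simps)
  also have "(-1::'a) ^ n * (-1) ^ n = 1" by (simp add: power_add[symmetric] )
  finally show ?thesis by simp
qed

lemma jtp_finite:
  fixes Y :: "'a::idom"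
  assumes Y: "Y \<noteq> 0" and ab: "0 < a" "a < b"
  shows "(\<Prod>i<n. (1 - Y ^ (a + b * i)) * (1 - Y ^ (b * Suc i - a)))
       = (\<Sum>k\<le>2 * n. (-1) ^ (k + n) * qb (Y ^ b) (2 * n) k * Y ^ ee b a (int k - int n))"
proof -
  define C where "C = (\<Sum>i<n. a + b * i) + b * n * n"
  define g where "g i = Y ^ (b * n) + (- (Y ^ a)) * (Y ^ b) ^ i" for i
  define h where "h i = 1 - Y ^ (b * Suc i - a)" for i
  have q: "(\<Prod>i<2 * n. g i) = (\<Sum>k\<le>2 * n. qb (Y ^ b) (2 * n) k * (Y ^ b) ^ tri k * (- (Y ^ a)) ^ k * (Y ^ (b * n)) ^ (2 * n - k))"
    unfolding g_def by (rule qbin_thm)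
  have g1: "g i = - (Y ^ (a + b * i)) * h (n - Suc i)" if "i < n" for i
  proof -
    have "b * Suc (n - Suc i) \<ge> b" by simp
    then have "a + b * i + (b * Suc (n - Suc i) - a) = b * n" using that ab
      by (simp add: Suc_diff_Suc algebra_simps diff_mult_distrib2)
    then have "Y ^ (b * n) = Y ^ (a + b * i) * Y ^ (b * Suc (n - Suc i) - a)"
      by (simp add: power_add[symmetric])
    then show ?thesis unfolding g_def h_def by (simp add: algebra_simps power_add power_mult)
  qed
  have g2: "g (n + i) = Y ^ (b * n) * (1 - Y ^ (a + b * i))" for i
    unfolding g_def by (simp add: algebra_simps power_add power_mult)
  have "(\<Prod>i<2 * n. g i) = (\<Prod>i<n. g i) * (\<Prod>i<n. g (n + i))"
    using prod_lessThan_add[of g n n] by (simp add: mult_2)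
  also have "(\<Prod>i<n. g i) = (\<Prod>i<n. - (Y ^ (a + b * i)) * h (n - Suc i))"
    by (intro prod.cong refl) (simp add: g1)
  also have "\<dots> = (\<Prod>i<n. - (Y ^ (a + b * i))) * (\<Prod>i<n. h i)"
    by (simp only: prod.distrib prod.nat_diff_reindex[of h n])
  also have "(\<Prod>i<n. - (Y ^ (a + b * i))) = (-1) ^ n * Y ^ (\<Sum>i<n. a + b * i)"
    by (induction n) (simp_all add: power_add algebra_simps)
  also have "(\<Prod>i<n. g (n + i)) = (Y ^ (b * n)) ^ n * (\<Prod>i<n. 1 - Y ^ (a + b * i))"
    by (simp add: g2 prod.distrib)
  finally have L0: "(\<Prod>i<2 * n. g i) = ((-1) ^ n * Y ^ (\<Sum>i<n. a + b * i)) * (\<Prod>i<n. h i) *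
      ((Y ^ (b * n)) ^ n * (\<Prod>i<n. 1 - Y ^ (a + b * i)))" .
  have YC: "Y ^ C = Y ^ (\<Sum>i<n. a + b * i) * (Y ^ (b * n)) ^ n"
    unfolding C_def by (simp only: power_add power_mult)
  have L: "(\<Prod>i<2 * n. g i) = ((-1) ^ n * Y ^ C) *
      ((\<Prod>i<n. 1 - Y ^ (a + b * i)) * (\<Prod>i<n. 1 - Y ^ (b * Suc i - a)))"
    unfolding L0 YC h_def by (simp only: mult_ac)
  have R: "(\<Sum>k\<le>2 * n. qb (Y ^ b) (2 * n) k * (Y ^ b) ^ tri k * (- (Y ^ a)) ^ k * (Y ^ (b * n)) ^ (2 * n - k))
     = ((-1) ^ n * Y ^ C) * (\<Sum>k\<le>2 * n. (-1) ^ (k + n) * qb (Y ^ b) (2 * n) k * Y ^ ee b a (int k - int n))"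
    unfolding sum_distrib_left
  proof (intro sum.cong refl)
    fix k assume "k \<in> {..2 * n}"
    then have k: "k \<le> 2 * n" by simp
    have "(Y ^ b) ^ tri k * (- (Y ^ a)) ^ k * (Y ^ (b * n)) ^ (2 * n - k)
        = (-1) ^ k * Y ^ (b * tri k + a * k + b * n * (2 * n - k))"
    proof -
      have e1: "(Y ^ b) ^ tri k = Y ^ (b * tri k)" by (rule power_mult[symmetric])
      have e2: "(- (Y ^ a)) ^ k = (-1) ^ k * Y ^ (a * k)" by (simp only: power_minus[of "Y ^ a" k] power_mult)
      have e3: "(Y ^ (b * n)) ^ (2 * n - k) = Y ^ (b * n * (2 * n - k))" by (rule power_mult[symmetric])
      show ?thesis unfolding e1 e2 e3 by (simp only: power_add mult_ac)
    qed
    also have "\<dots> = (-1) ^ k * Y ^ (C + ee b a (int k - int n))"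
      unfolding C_def exponent_identity[OF ab k] ..
    also have "\<dots> = ((-1) ^ n * (-1) ^ (k + n)) * (Y ^ C * Y ^ ee b a (int k - int n))"
      by (subst neg1_pow[of k n]) (simp only: power_add)
    finally have E: "(Y ^ b) ^ tri k * (- (Y ^ a)) ^ k * (Y ^ (b * n)) ^ (2 * n - k) =
       ((-1) ^ n * (-1) ^ (k + n)) * (Y ^ C * Y ^ ee b a (int k - int n))" .
    have "qb (Y ^ b) (2 * n) k * (Y ^ b) ^ tri k * (- (Y ^ a)) ^ k * (Y ^ (b * n)) ^ (2 * n - k)
       = qb (Y ^ b) (2 * n) k * ((Y ^ b) ^ tri k * (- (Y ^ a)) ^ k * (Y ^ (b * n)) ^ (2 * n - k))"
      by (simp only: mult.assoc)
    also have "\<dots> = qb (Y ^ b) (2 * n) k * (((-1) ^ n * (-1) ^ (k + n)) * (Y ^ C * Y ^ ee b a (int k - int n)))"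
      unfolding E ..
    finally show "qb (Y ^ b) (2 * n) k * (Y ^ b) ^ tri k * (- (Y ^ a)) ^ k * (Y ^ (b * n)) ^ (2 * n - k)
        = (-1) ^ n * Y ^ C * ((-1) ^ (k + n) * qb (Y ^ b) (2 * n) k * Y ^ ee b a (int k - int n))"
      by (simp only: mult_ac)
  qed
  have nz: "(-1) ^ n * Y ^ C \<noteq> 0" using Y by simp
  have "((-1) ^ n * Y ^ C) * (\<Prod>i<n. (1 - Y ^ (a + b * i)) * (1 - Y ^ (b * Suc i - a)))
     = ((-1) ^ n * Y ^ C) * (\<Sum>k\<le>2 * n. (-1) ^ (k + n) * qb (Y ^ b) (2 * n) k * Y ^ ee b a (int k - int n))"
    using q L R by (simp only: prod.distrib)
  then show ?thesis using nz by (rule mult_left_cancel[THEN iffD1, rotated])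
qed


definition eqt :: "nat \<Rightarrow> real fps \<Rightarrow> real fps \<Rightarrow> bool" where
  "eqt D f g \<longleftrightarrow> (\<forall>i\<le>D. f $ i = g $ i)"

lemma eqt_refl [simp]: "eqt D f f" by (simp add: eqt_def)
lemma eqt_sym: "eqt D f g \<Longrightarrow> eqt D g f" by (simp add: eqt_def)
lemma eqt_trans: "eqt D f g \<Longrightarrow> eqt D g h \<Longrightarrow> eqt D f h" by (simp add: eqt_def)

lemma eqt_mult: "eqt D f f' \<Longrightarrow> eqt D g g' \<Longrightarrow> eqt D (f * g) (f' * g')"
  unfolding eqt_def fps_mult_nth by (auto intro!: sum.cong)

lemma eqt_add: "eqt D f f' \<Longrightarrow> eqt D g g' \<Longrightarrow> eqt D (f + g) (f' + g')"
  unfolding eqt_def by auto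

lemma eqt_sum: "(\<And>x. x \<in> A \<Longrightarrow> eqt D (f x) (g x)) \<Longrightarrow> eqt D (sum f A) (sum g A)"
proof (induction A rule: infinite_finite_induct)
  case (insert x F)
  then show ?case by (simp add: eqt_add)
qed auto

lemma eqt_Xhigh: "D < e \<Longrightarrow> eqt D (fps_X ^ e * f) 0"
  unfolding eqt_def by (simp add: fps_X_power_mult_nth)

lemma eqt_cancel:
  assumes "P $ 0 \<noteq> 0" "eqt D (A * P) (B * P)"
  shows "eqt D A B"
proof -
  have "eqt D (A * P * inverse P) (B * P * inverse P)"
    using assms(2) by (rule eqt_mult) simp
  then show ?thesis using inverse_mult_eq_1'[OF assms(1)] by (simp add: mult.assoc)
qed

lemma pp_nth0: "pp (fps_X ^ Suc c :: real fps) t $ 0 = 1"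
  by (induction t) (simp_all add: pp_def fps_nth_power_0)

lemma pp_trunc:
  assumes "c \<ge> 1" "D \<le> t"
  shows "eqt D (pp (fps_X ^ c :: real fps) t) (pp (fps_X ^ c) D)"
  using assms(2)
proof (induction t rule: dec_induct)
  case (step t)
  have "(fps_X ^ c) ^ Suc t = (fps_X ^ (c * Suc t) * 1 :: real fps)"
    by (simp only: power_mult mult_1_right)
  then have "eqt D (1 - (fps_X ^ c) ^ Suc t) (1 - fps_X ^ (c * Suc t) * 1)"
    by simp
  moreover have "eqt D (fps_X ^ (c * Suc t) * 1) 0"
  proof (rule eqt_Xhigh)
    have "Suc t \<le> c * Suc t" using assms(1) mult_le_mono1[of 1 c "Suc t"] by simp
    then show "D < c * Suc t" using step.hyps by linarith
  qed
  ultimately have "eqt D (1 - (fps_X ^ c) ^ Suc t) 1"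
    unfolding eqt_def by simp
  then have "eqt D (pp (fps_X ^ c) t * (1 - (fps_X ^ c) ^ Suc t)) (pp (fps_X ^ c) D * 1)"
    using step.IH by (rule eqt_mult[rotated])
  then show ?case by (simp add: pp_Suc)
qed simp

lemma jtp_trunc:
  fixes a b s n D :: nat
  assumes ab: "0 < a" "a < b" and s: "1 \<le> s" and n: "2 * D \<le> n"
  shows "eqt D ((\<Prod>i<n. (1 - (fps_X ^ s) ^ (a + b * i)) * (1 - (fps_X ^ s) ^ (b * Suc i - a))) * pp ((fps_X ^ s) ^ b) n)
           (\<Sum>k\<le>2 * n. (-1) ^ (k + n) * (fps_X ^ s) ^ ee b a (int k - int n))"
proof -
  define Y where "Y = (fps_X ^ s :: real fps)"
  have Y0: "Y \<noteq> 0" by (simp add: Y_def)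
  have Yb: "Y ^ b = fps_X ^ (s * b)" by (simp add: Y_def power_mult)
  have sb: "1 \<le> s * b" using s ab by simp
  define P where "P = pp (fps_X ^ (s * b) :: real fps) D"
  have P0: "P $ 0 \<noteq> 0"
  proof -
    have "s * b = Suc (s * b - 1)" using sb by simp
    then show ?thesis unfolding P_def by (metis pp_nth0 one_neq_zero)
  qed
  have ppt: "eqt D (pp (Y ^ b) t) P" if "D \<le> t" for t
    using pp_trunc[OF sb that] unfolding Yb P_def .
  have "eqt D ((\<Prod>i<n. (1 - Y ^ (a + b * i)) * (1 - Y ^ (b * Suc i - a))) * pp (Y ^ b) n)
           (\<Sum>k\<le>2 * n. (-1) ^ (k + n) * Y ^ ee b a (int k - int n))"
    unfolding jtp_finite[OF Y0 ab] sum_distrib_right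
  proof (rule eqt_sum)
    fix k assume "k \<in> {..2 * n}"
    then have k: "k \<le> 2 * n" by simp
    define E where "E = ee b a (int k - int n)"
    define q where "q = qb (Y ^ b) (2 * n) k"
    show "eqt D ((-1) ^ (k + n) * qb (Y ^ b) (2 * n) k * Y ^ ee b a (int k - int n) * pp (Y ^ b) n)
                ((-1) ^ (k + n) * Y ^ ee b a (int k - int n))"
    proof (cases "D < s * E")
      case True
      have YE: "Y ^ E = fps_X ^ (s * E)" by (simp add: Y_def power_mult)
      have "eqt D (fps_X ^ (s * E) * ((-1) ^ (k + n) * q * pp (Y ^ b) n)) 0"
        using True by (rule eqt_Xhigh)
      moreover have "eqt D (fps_X ^ (s * E) * (-1) ^ (k + n)) 0"
        using True by (rule eqt_Xhigh)
      ultimately show ?thesis using YE unfolding eqt_def E_def q_def by (simp add: mult_ac)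
    next
      case False
      have "E \<le> s * E" using s by simp
      then have "E \<le> D" using False by linarith
      moreover have "nat \<bar>int k - int n\<bar> \<le> E" unfolding E_def by (rule ee_ge[OF ab])
      ultimately have kD: "D \<le> k" "D \<le> 2 * n - k" using n k by linarith+
      have qp: "q * pp (Y ^ b) k * pp (Y ^ b) (2 * n - k) = pp (Y ^ b) (2 * n)"
        unfolding q_def using k by (rule qb_prod)
      have "eqt D (q * pp (Y ^ b) k * pp (Y ^ b) (2 * n - k)) (q * P * P)"
        by (intro eqt_mult eqt_refl ppt kD)
      then have "eqt D (q * P * P) (pp (Y ^ b) (2 * n))"
        unfolding qp by (rule eqt_sym)
      moreover have "eqt D (pp (Y ^ b) (2 * n)) P" using n by (intro ppt) simp
      ultimately have "eqt D (q * P * P) P"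
        by (rule eqt_trans)
      then have "eqt D (q * P * P) (1 * P)" by (simp only: mult_1_left)
      then have "eqt D (q * P) 1" by (rule eqt_cancel[OF P0])
      moreover have "eqt D (q * pp (Y ^ b) n) (q * P)"
        using n by (intro eqt_mult eqt_refl ppt) simp
      ultimately have "eqt D (q * pp (Y ^ b) n) 1" by (rule eqt_trans[rotated])
      then have "eqt D (((-1) ^ (k + n) * Y ^ E) * (q * pp (Y ^ b) n)) (((-1) ^ (k + n) * Y ^ E) * 1)"
        by (intro eqt_mult eqt_refl)
      then show ?thesis unfolding E_def q_def by (simp add: mult_ac)
    qed
  qed
  then show ?thesis unfolding Y_def .
qed


lemma sign_eq: "((-1::'a::ring_1) ^ (k + n)) = (-1) ^ (nat \<bar>int k - int n\<bar>)"
proof -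
  have "even (k + n) = even (nat \<bar>int k - int n\<bar>)"
  proof (cases "n \<le> k")
    case True
    then have "nat \<bar>int k - int n\<bar> = k - n" by simp
    moreover have "k + n = (k - n) + 2 * n" using True by simp
    ultimately show ?thesis by simp
  next
    case False
    then have "nat \<bar>int k - int n\<bar> = n - k" by simp
    moreover have "k + n = (n - k) + 2 * k" using False by simp
    ultimately show ?thesis by (metis even_add even_mult_iff even_numeral)
  qed
  then show ?thesis by (simp add: minus_one_power_iff)
qed

definition Th :: "nat \<Rightarrow> nat \<Rightarrow> nat \<Rightarrow> nat \<Rightarrow> real fps" where
  "Th b a s n = (\<Sum>j\<in>{- int n..int n}. (-1) ^ (nat \<bar>j\<bar>) * (fps_X ^ s) ^ ee b a j)"

lemma Th_reindex:
  "(\<Sum>k\<le>2 * n. (-1) ^ (k + n) * (fps_X ^ s) ^ ee b a (int k - int n)) = Th b a s n"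
  unfolding Th_def
proof (rule sum.reindex_bij_witness[where i = "\<lambda>j. nat (j + int n)" and j = "\<lambda>k. int k - int n"])
  fix k assume "k \<in> {..2 * n}"
  then show "(-1) ^ nat \<bar>int k - int n\<bar> * (fps_X ^ s) ^ ee b a (int k - int n) =
             (-1) ^ (k + n) * (fps_X ^ s :: real fps) ^ ee b a (int k - int n)"
    using sign_eq[of k n, where 'a="real fps"] by simp
qed auto

lemma sym_sum: "(\<Sum>j\<in>{- int n..int n}. f j) = f 0 + (\<Sum>k\<in>{1..n}. f (int k) + f (- int k))"
proof (induction n)
  case 0
  then show ?case by simp
next
  case (Suc n)
  have "{- int (Suc n)..int (Suc n)} = insert (int (Suc n)) (insert (- int (Suc n)) {- int n..int n})"
    by auto
  then show ?case using Suc by (simp add: algebra_simps)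
qed

lemma regroup3:
  fixes Q :: "'a::comm_ring_1"
  shows "(\<Prod>i<N. (1 - Q ^ (1 + 3 * i)) * (1 - Q ^ (3 * Suc i - 1))) * pp (Q ^ 3) N = pp Q (3 * N)"
proof (induction N)
  case 0
  then show ?case by (simp add: pp_def)
next
  case (Suc N)
  have e: "3 * Suc N = Suc (Suc (Suc (3 * N)))" by simp
  have x1: "1 + 3 * N = Suc (3 * N)" "3 * Suc N - 1 = Suc (Suc (3 * N))" by simp_all
  have x3: "(Q ^ 3) ^ Suc N = Q ^ Suc (Suc (Suc (3 * N)))" by (simp only: power_mult[symmetric] e)
  have "(\<Prod>i<Suc N. (1 - Q ^ (1 + 3 * i)) * (1 - Q ^ (3 * Suc i - 1))) * pp (Q ^ 3) (Suc N)
     = ((\<Prod>i<N. (1 - Q ^ (1 + 3 * i)) * (1 - Q ^ (3 * Suc i - 1))) * pp (Q ^ 3) N)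
       * ((1 - Q ^ (1 + 3 * N)) * (1 - Q ^ (3 * Suc N - 1))) * (1 - (Q ^ 3) ^ Suc N)"
    by (simp only: prod.lessThan_Suc pp_Suc mult_ac)
  also have "\<dots> = pp Q (3 * N) * ((1 - Q ^ (1 + 3 * N)) * (1 - Q ^ (3 * Suc N - 1))) * (1 - (Q ^ 3) ^ Suc N)"
    by (simp only: Suc.IH)
  also have "\<dots> = pp Q (3 * Suc N)"
    unfolding x1 x3 e by (simp only: pp_Suc mult.assoc diff_Suc_1)
  finally show ?case .
qed


lemma ee_P7: "int (ee 5 1 (int k)) = P7 k"
proof -
  have "2 * int (ee 5 1 (int k)) = int k * (5 * int k - 3)"
    using ee2[of 1 5 "int k"] by (simp add: algebra_simps)
  then show ?thesis unfolding P7_def by linarith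
qed

lemma ee_Q7: "int (ee 5 1 (- int k)) = Q7 k"
proof -
  have "2 * int (ee 5 1 (- int k)) = int k * (5 * int k + 3)"
    using ee2[of 1 5 "- int k"] by (simp add: algebra_simps)
  then show ?thesis unfolding Q7_def by linarith
qed

lemma ee_P5: "int (ee 3 1 (int k)) = P5 k"
proof -
  have "2 * int (ee 3 1 (int k)) = int k * (3 * int k - 1)"
    using ee2[of 1 3 "int k"] by (simp add: algebra_simps)
  then show ?thesis unfolding P5_def by linarith
qed

lemma ee_Q5: "int (ee 3 1 (- int k)) = Q5 k"
proof -
  have "2 * int (ee 3 1 (- int k)) = int k * (3 * int k + 1)"
    using ee2[of 1 3 "- int k"] by (simp add: algebra_simps)
  then show ?thesis unfolding Q5_def by linarith
qed

lemma ee31_inj: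
  assumes "ee 3 1 i = ee 3 1 j"
  shows "i = j"
proof -
  have "2 * int (ee 3 1 i) = 2 * int (ee 3 1 j)" using assms by simp
  then have "3 * (i * (i - 1)) + 2 * i = 3 * (j * (j - 1)) + 2 * j"
    using ee2[of 1 3 i] ee2[of 1 3 j] by simp
  then have "(i - j) * (3 * (i + j) - 1) = 0" by (simp add: algebra_simps)
  moreover have "3 * (i + j) - 1 \<noteq> 0" by presburger
  ultimately show ?thesis by simp
qed

definition AA :: "nat \<Rightarrow> nat set" where
  "AA N = (\<lambda>i. 1 + 5 * i) ` {..<N} \<union> (\<lambda>i. 5 * i + 4) ` {..<N}"

lemma AA_finite: "finite (AA N)" by (simp add: AA_def)
lemma AA_0: "0 \<notin> AA N" by (auto simp: AA_def)

lemma AA_prod: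
  "(\<Prod>p\<in>AA N. 1 - fps_X ^ p :: real fps) =
   (\<Prod>i<N. (1 - (fps_X ^ 1) ^ (1 + 5 * i)) * (1 - (fps_X ^ 1) ^ (5 * Suc i - 1)))"
proof -
  have disj: "(\<lambda>i. 1 + 5 * i) ` {..<N} \<inter> (\<lambda>i. 5 * i + 4) ` {..<N} = {}" by auto presburger
  have "(\<Prod>p\<in>AA N. 1 - fps_X ^ p :: real fps) =
      (\<Prod>p\<in>(\<lambda>i. 1 + 5 * i) ` {..<N}. 1 - fps_X ^ p) * (\<Prod>p\<in>(\<lambda>i. 5 * i + 4) ` {..<N}. 1 - fps_X ^ p)"
    unfolding AA_def by (rule prod.union_disjoint) (use disj in auto)
  also have "\<dots> = (\<Prod>i<N. 1 - fps_X ^ (1 + 5 * i)) * (\<Prod>i<N. 1 - fps_X ^ (5 * i + 4))"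
  proof -
    have r1: "(\<Prod>p\<in>(\<lambda>i. 1 + 5 * i) ` {..<N}. 1 - fps_X ^ p) = (\<Prod>i<N. 1 - fps_X ^ (1 + 5 * i) :: real fps)"
      by (rule prod.reindex_cong[where l = "\<lambda>i. 1 + 5 * i"]) (auto simp: inj_on_def)
    have r2: "(\<Prod>p\<in>(\<lambda>i. 5 * i + 4) ` {..<N}. 1 - fps_X ^ p) = (\<Prod>i<N. 1 - fps_X ^ (5 * i + 4) :: real fps)"
      by (rule prod.reindex_cong[where l = "\<lambda>i. 5 * i + 4"]) (auto simp: inj_on_def)
    show ?thesis by (simp only: r1 r2)
  qed
  also have "\<dots> = (\<Prod>i<N. (1 - (fps_X ^ 1) ^ (1 + 5 * i)) * (1 - (fps_X ^ 1) ^ (5 * Suc i - 1)))"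
    unfolding prod.distrib[symmetric]
  proof (rule prod.cong[OF refl])
    fix i :: nat
    have "5 * Suc i - 1 = 5 * i + 4" by simp
    then show "(1 - fps_X ^ (1 + 5 * i)) * (1 - fps_X ^ (5 * i + 4)) =
      (1 - (fps_X ^ 1) ^ (1 + 5 * i)) * (1 - (fps_X ^ 1) ^ (5 * Suc i - 1) :: real fps)"
      by (simp only: power_one_right)
  qed
  finally show ?thesis .
qed

lemma AA_count:
  assumes "m < N"
  shows "int (cnt (AA N) m) = p15p45 (int m)"
proof -
  have "{M. set_mset M \<subseteq> AA N \<and> sum_mset M = m} =
        {M :: nat multiset. (\<forall>x\<in>#M. x mod 5 = 1 \<or> x mod 5 = 4) \<and> sum_mset M = nat (int m)}"
  proof (intro set_eqI iffI)
    fix M assume "M \<in> {M. set_mset M \<subseteq> AA N \<and> sum_mset M = m}"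
    then show "M \<in> {M :: nat multiset. (\<forall>x\<in>#M. x mod 5 = 1 \<or> x mod 5 = 4) \<and> sum_mset M = nat (int m)}"
      by (auto simp: AA_def)
  next
    fix M assume M: "M \<in> {M :: nat multiset. (\<forall>x\<in>#M. x mod 5 = 1 \<or> x mod 5 = 4) \<and> sum_mset M = nat (int m)}"
    have "x \<in> AA N" if x: "x \<in># M" for x
    proof -
      have "x \<le> sum_mset M" using x by (metis le_add1 sum_mset.remove)
      then have xm: "x < N" using M assms by auto
      have "x mod 5 = 1 \<or> x mod 5 = 4" using M x by auto
      then have "x = 1 + 5 * (x div 5) \<or> x = 5 * (x div 5) + 4" by presburger
      moreover have "x div 5 < N" using xm by linarith
      ultimately show ?thesis unfolding AA_def by blast
    qed
    then show "M \<in> {M. set_mset M \<subseteq> AA N \<and> sum_mset M = m}" using M by auto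
  qed
  then show ?thesis unfolding cnt_def p15p45_def by simp
qed


lemma Mterm_sum:
  assumes "D \<le> N"
  shows "real_of_int (Mterm (int D)) =
    (\<Sum>j\<in>{- int N..int N}. (-1) ^ (nat \<bar>j\<bar>) * (if D = 5 * ee 3 1 j then 1 else 0))"
proof -
  define S where "S = {j \<in> {- int N..int N}. D = 5 * ee 3 1 j}"
  have "(\<Sum>j\<in>{- int N..int N}. (-1) ^ (nat \<bar>j\<bar>) * (if D = 5 * ee 3 1 j then 1 else 0 :: real))
      = (\<Sum>j\<in>{- int N..int N}. if D = 5 * ee 3 1 j then (-1) ^ (nat \<bar>j\<bar>) else 0)"
    by (intro sum.cong) auto
  also have "\<dots> = (\<Sum>j\<in>S. (-1) ^ (nat \<bar>j\<bar>))"
    unfolding S_def by (rule sum.inter_filter[symmetric]) simp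
  finally have RS: "(\<Sum>j\<in>{- int N..int N}. (-1) ^ (nat \<bar>j\<bar>) * (if D = 5 * ee 3 1 j then 1 else 0 :: real))
      = (\<Sum>j\<in>S. (-1) ^ (nat \<bar>j\<bar>))" .
  show ?thesis
  proof (cases "\<exists>m::nat. int D = 5 * P5 m \<or> int D = 5 * Q5 m")
    case True
    define m0 where "m0 = (SOME m::nat. int D = 5 * P5 m \<or> int D = 5 * Q5 m)"
    have hm0: "int D = 5 * P5 m0 \<or> int D = 5 * Q5 m0"
      unfolding m0_def using someI_ex[OF True] .
    have M: "Mterm (int D) = (-1) ^ m0" unfolding Mterm_def m0_def using True by simp
    define j0 where "j0 = (if int D = 5 * P5 m0 then int m0 else - int m0)"
    have j0: "D = 5 * ee 3 1 j0"
    proof (cases "int D = 5 * P5 m0")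
      case True
      then show ?thesis unfolding j0_def using ee_P5[of m0] by simp
    next
      case False
      then have "int D = 5 * Q5 m0" using hm0 by simp
      then show ?thesis unfolding j0_def using False ee_Q5[of m0] by simp
    qed
    have nj0: "nat \<bar>j0\<bar> = m0" unfolding j0_def by simp
    have "nat \<bar>j0\<bar> \<le> ee 3 1 j0" by (rule ee_ge) auto
    then have "nat \<bar>j0\<bar> \<le> N" using j0 assms by linarith
    then have j0r: "j0 \<in> {- int N..int N}" by auto
    have "S = {j0}"
    proof
      show "S \<subseteq> {j0}"
      proof
        fix j assume "j \<in> S"
        then have "D = 5 * ee 3 1 j" unfolding S_def by simp
        then have "ee 3 1 j = ee 3 1 j0" using j0 by simp
        then show "j \<in> {j0}" using ee31_inj by blast
      qed
      show "{j0} \<subseteq> S" unfolding S_def using j0 j0r by simp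
    qed
    then show ?thesis using RS M nj0 by simp
  next
    case False
    have "S = {}"
    proof (rule ccontr)
      assume "S \<noteq> {}"
      then obtain j where j: "D = 5 * ee 3 1 j" unfolding S_def by auto
      show False
      proof (cases "j \<ge> 0")
        case True
        then have "j = int (nat j)" by simp
        then have "int D = 5 * P5 (nat j)" using j ee_P5[of "nat j"] by (metis of_nat_mult of_nat_numeral)
        then show False using False by blast
      next
        case False2: False
        then have "j = - int (nat (- j))" by simp
        then have "int D = 5 * Q5 (nat (- j))" using j ee_Q5[of "nat (- j)"] by (metis of_nat_mult of_nat_numeral)
        then show False using False by blast
      qed
    qed
    moreover have "Mterm (int D) = 0" unfolding Mterm_def using False by simp
    ultimately show ?thesis using RS by simp
  qed
qed


lemma neg1_mult_nth: "(((-1) ^ m :: real fps) * f) $ i = (-1) ^ m * f $ i"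
  by (simp add: minus_one_power_iff)

lemma p15p45_neg: "m < 0 \<Longrightarrow> p15p45 m = 0"
  by (simp add: p15p45_def)

theorem theorem2p3:
  fixes n :: nat
  shows "real_of_int (p15p45 (int n)) =
    real_of_int (Mterm (int n)) +
    (\<Sum>k. (-1) ^ (Suc k + 1) *
       real_of_int (p15p45 (int n - P7 (Suc k)) + p15p45 (int n - Q7 (Suc k))))"
proof -
  define N where "N = 2 * n + 1"
  define F where "F = Gen (AA N)"
  define PL5 where "PL5 = (\<Prod>i<N. (1 - (fps_X ^ 1) ^ (1 + 5 * i)) * (1 - (fps_X ^ 1) ^ (5 * Suc i - 1)) :: real fps)"
  define PL3 where "PL3 = (\<Prod>i<N. (1 - (fps_X ^ 5) ^ (1 + 3 * i)) * (1 - (fps_X ^ 5) ^ (3 * Suc i - 1)) :: real fps)"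
  have f1: "eqt n (PL5 * pp ((fps_X ^ 1) ^ 5) N) (Th 5 1 1 N)"
    using jtp_trunc[of 1 5 1 n N] Th_reindex[of N 1 5 1] unfolding PL5_def N_def by simp
  have f2: "eqt n (PL3 * pp ((fps_X ^ 5) ^ 3) N) (Th 3 1 5 N)"
    using jtp_trunc[of 1 3 5 n N] Th_reindex[of N 5 3 1] unfolding PL3_def N_def by simp
  have f3: "PL3 * pp ((fps_X ^ 5) ^ 3) N = pp (fps_X ^ 5) (3 * N)"
    unfolding PL3_def by (rule regroup3)
  have f4a: "eqt n (pp (fps_X ^ 5) (3 * N)) (pp (fps_X ^ 5) n)"
    by (rule pp_trunc) (auto simp: N_def)
  have f4b: "eqt n (pp ((fps_X ^ 1) ^ 5) N) (pp (fps_X ^ 5) n)"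
    unfolding power_one_right by (rule pp_trunc) (auto simp: N_def)
  have f5: "F * PL5 = 1"
    using Gen_prod[OF AA_finite AA_0, of N] unfolding F_def PL5_def AA_prod .
  have "eqt n (F * Th 5 1 1 N) (F * (PL5 * pp ((fps_X ^ 1) ^ 5) N))"
    by (rule eqt_mult[OF eqt_refl eqt_sym[OF f1]])
  also have "F * (PL5 * pp ((fps_X ^ 1) ^ 5) N) = pp ((fps_X ^ 1) ^ 5) N"
    by (simp add: mult.assoc[symmetric] f5)
  finally have c1: "eqt n (F * Th 5 1 1 N) (pp ((fps_X ^ 1) ^ 5) N)" .
  have c2: "eqt n (pp ((fps_X ^ 1) ^ 5) N) (Th 3 1 5 N)"
  proof -
    have "eqt n (pp ((fps_X ^ 1) ^ 5) N) (pp (fps_X ^ 5) (3 * N))"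
      using f4b eqt_sym[OF f4a] by (rule eqt_trans)
    then show ?thesis using f2 unfolding f3 by (rule eqt_trans)
  qed
  have key: "(F * Th 5 1 1 N) $ n = Th 3 1 5 N $ n"
    using eqt_trans[OF c1 c2] unfolding eqt_def by simp
  have rhs: "Th 3 1 5 N $ n = real_of_int (Mterm (int n))"
  proof -
    have "Th 3 1 5 N $ n = (\<Sum>j\<in>{- int N..int N}. (-1) ^ (nat \<bar>j\<bar>) * (if n = 5 * ee 3 1 j then 1 else 0))"
      unfolding Th_def fps_sum_nth neg1_mult_nth by (simp add: power_mult[symmetric])
    also have "\<dots> = real_of_int (Mterm (int n))"
      by (rule Mterm_sum[symmetric]) (simp add: N_def)
    finally show ?thesis .
  qed
  define f where "f j = (-1) ^ (nat \<bar>j\<bar>) * real_of_int (p15p45 (int n - int (ee 5 1 j)))" for j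
  have lhs: "(F * Th 5 1 1 N) $ n = (\<Sum>j\<in>{- int N..int N}. f j)"
    unfolding Th_def sum_distrib_left fps_sum_nth
  proof (rule sum.cong[OF refl])
    fix j
    have "(F * ((-1) ^ nat \<bar>j\<bar> * (fps_X ^ 1) ^ ee 5 1 j)) $ n
        = (-1) ^ nat \<bar>j\<bar> * (F * fps_X ^ ee 5 1 j) $ n"
      by (simp add: mult.left_commute[of F] neg1_mult_nth del: power_Suc)
    also have "(F * fps_X ^ ee 5 1 j) $ n = real_of_int (p15p45 (int n - int (ee 5 1 j)))"
    proof (cases "n < ee 5 1 j")
      case True
      then show ?thesis by (simp add: fps_X_power_mult_right_nth p15p45_neg)
    next
      case False
      have d: "int n - int (ee 5 1 j) = int (n - ee 5 1 j)" using False by simp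
      have lt: "n - ee 5 1 j < N" unfolding N_def by simp
      have "(F * fps_X ^ ee 5 1 j) $ n = real (cnt (AA N) (n - ee 5 1 j))"
        using False by (simp add: fps_X_power_mult_right_nth F_def Gen_def)
      also have "\<dots> = real_of_int (int (cnt (AA N) (n - ee 5 1 j)))" by simp
      also have "int (cnt (AA N) (n - ee 5 1 j)) = p15p45 (int (n - ee 5 1 j))"
        by (rule AA_count[OF lt])
      finally show ?thesis unfolding d .
    qed
    finally show "(F * ((-1) ^ nat \<bar>j\<bar> * (fps_X ^ 1) ^ ee 5 1 j)) $ n = f j"
      unfolding f_def .
  qed
  have ee0: "ee 5 1 0 = 0" by (simp add: ee_def)
  have main: "real_of_int (p15p45 (int n)) + (\<Sum>k\<in>{1..N}. (-1) ^ k *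
      (real_of_int (p15p45 (int n - P7 k)) + real_of_int (p15p45 (int n - Q7 k))))
      = real_of_int (Mterm (int n))"
  proof -
    have "(\<Sum>j\<in>{- int N..int N}. f j) = f 0 + (\<Sum>k\<in>{1..N}. f (int k) + f (- int k))"
      by (rule sym_sum)
    also have "f 0 = real_of_int (p15p45 (int n))" unfolding f_def ee0 by simp
    also have "(\<Sum>k\<in>{1..N}. f (int k) + f (- int k)) = (\<Sum>k\<in>{1..N}. (-1) ^ k *
      (real_of_int (p15p45 (int n - P7 k)) + real_of_int (p15p45 (int n - Q7 k))))"
      unfolding f_def ee_P7 ee_Q7 by (intro sum.cong refl) (simp add: algebra_simps)
    finally show ?thesis using key lhs rhs by simp
  qed
  define g where "g k = (-1) ^ (Suc k + 1) *
       real_of_int (p15p45 (int n - P7 (Suc k)) + p15p45 (int n - Q7 (Suc k)))" for k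
  have "suminf g = (\<Sum>k\<in>{..<N}. g k)"
  proof (rule suminf_finite)
    fix k assume "k \<notin> {..<N}"
    then have kN: "N \<le> k" by simp
    have "nat \<bar>int (Suc k)\<bar> \<le> ee 5 1 (int (Suc k))" by (rule ee_ge) auto
    then have "int n < P7 (Suc k)" using kN ee_P7[of "Suc k"] unfolding N_def by linarith
    moreover have "nat \<bar>- int (Suc k)\<bar> \<le> ee 5 1 (- int (Suc k))" by (rule ee_ge) auto
    then have "int n < Q7 (Suc k)" using kN ee_Q7[of "Suc k"] unfolding N_def by linarith
    ultimately show "g k = 0" unfolding g_def by (simp add: p15p45_neg)
  qed simp
  also have "\<dots> = (\<Sum>k\<in>{1..N}. (-1) ^ (k + 1) *
       real_of_int (p15p45 (int n - P7 k) + p15p45 (int n - Q7 k)))"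
    unfolding g_def by (simp only: One_nat_def sum.atLeast1_atMost_eq)
  also have "\<dots> = - (\<Sum>k\<in>{1..N}. (-1) ^ k *
      (real_of_int (p15p45 (int n - P7 k)) + real_of_int (p15p45 (int n - Q7 k))))"
    by (simp add: sum_negf[symmetric])
  finally have "suminf g = - (\<Sum>k\<in>{1..N}. (-1) ^ k *
      (real_of_int (p15p45 (int n - P7 k)) + real_of_int (p15p45 (int n - Q7 k))))" .
  then show ?thesis using main unfolding g_def by linarith
qed

end
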